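(* Let $\Omega\subset\mathbb{R}^d$, $d\le3$, be a bounded polytopal domain with Lipschitz boundary, $\psi\in W^{2,\infty}(\Omega)$ with $\Delta\psi\le0$, $\tau>0$, $N\in\mathbb{N}$, and $u^0:=u_0\in L^\infty(\Omega)$, $u_0\ge0$. For $n=1,\dots,N$ let $u^n\in H^1_0(\Omega)$ satisfy \[ (u^n,v)+\tau\Big(\int_\Omega\nabla u^n\cdot\nabla v\,\mathrm{d}x+\int_\Omega u^n\nabla\psi\cdot\nabla v\,\mathrm{d}x\Big)=(u^{n-1},v)\qquad\forall v\in H^1_0(\Omega). \] Then for $n=1,\dots,N$, \[ \tfrac12\|u^n\|_{L^2(\Omega)}^2\le\tfrac12\|u^{n-1}\|_{L^2(\Omega)}^2-\tau\|\nabla u^n\|_{L^2(\Omega)}^2. \]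
   Context: $(\cdot,\cdot)$ is the $L^2(\Omega)$ inner product. *)

theory Defs
  imports "HOL-Analysis.Analysis"
begin

definition partial :: "(real^'d \<Rightarrow> real) \<Rightarrow> 'd \<Rightarrow> real^'d \<Rightarrow> real" where
  "partial f i x = frechet_derivative f (at x) (axis i 1)"

definition grad :: "(real^'d \<Rightarrow> real) \<Rightarrow> real^'d \<Rightarrow> real^'d" where
  "grad f x = (\<chi> i. partial f i x)"

primrec Ck :: "nat \<Rightarrow> (real^'d \<Rightarrow> real) \<Rightarrow> bool" where
  "Ck 0 f = continuous_on UNIV f"
| "Ck (Suc k) f = ((\<forall>x. f differentiable (at x)) \<and> (\<forall>i. Ck k (partial f i)))"

definition smooth :: "(real^'d \<Rightarrow> real) \<Rightarrow> bool" where
  "smooth f \<longleftrightarrow> (\<forall>k. Ck k f)"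

definition test_fun :: "(real^'d) set \<Rightarrow> (real^'d \<Rightarrow> real) \<Rightarrow> bool" where
  "test_fun \<Omega> \<phi> \<longleftrightarrow> smooth \<phi> \<and> compact (closure {x. \<phi> x \<noteq> 0})
       \<and> closure {x. \<phi> x \<noteq> 0} \<subseteq> \<Omega>"

definition loc_int :: "(real^'d) set \<Rightarrow> (real^'d \<Rightarrow> real) \<Rightarrow> bool" where
  "loc_int \<Omega> f \<longleftrightarrow> (\<forall>K. compact K \<and> K \<subseteq> \<Omega> \<longrightarrow> set_integrable lborel K f)"

definition L2 :: "(real^'d) set \<Rightarrow> (real^'d \<Rightarrow> real) \<Rightarrow> bool" where
  "L2 \<Omega> f \<longleftrightarrow> set_borel_measurable lborel \<Omega> f \<and> set_integrable lborel \<Omega> (\<lambda>x. (f x)\<^sup>2)"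

definition L2_vec :: "(real^'d) set \<Rightarrow> (real^'d \<Rightarrow> real^'d) \<Rightarrow> bool" where
  "L2_vec \<Omega> G \<longleftrightarrow> (\<forall>i. L2 \<Omega> (\<lambda>x. G x $ i))"

definition L2norm :: "(real^'d) set \<Rightarrow> (real^'d \<Rightarrow> real) \<Rightarrow> real" where
  "L2norm \<Omega> f = sqrt (LINT x:\<Omega>|lborel. (f x)\<^sup>2)"

definition L2norm_vec :: "(real^'d) set \<Rightarrow> (real^'d \<Rightarrow> real^'d) \<Rightarrow> real" where
  "L2norm_vec \<Omega> G = sqrt (LINT x:\<Omega>|lborel. (norm (G x))\<^sup>2)"

definition Linfty :: "(real^'d) set \<Rightarrow> (real^'d \<Rightarrow> real) \<Rightarrow> bool" where
  "Linfty \<Omega> f \<longleftrightarrow> set_borel_measurable lborel \<Omega> f \<and>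
     (\<exists>C. AE x in lborel. x \<in> \<Omega> \<longrightarrow> \<bar>f x\<bar> \<le> C)"

definition weak_partial :: "(real^'d) set \<Rightarrow> (real^'d \<Rightarrow> real) \<Rightarrow> 'd \<Rightarrow> (real^'d \<Rightarrow> real) \<Rightarrow> bool" where
  "weak_partial \<Omega> u i g \<longleftrightarrow> loc_int \<Omega> u \<and> loc_int \<Omega> g \<and>
     (\<forall>\<phi>. test_fun \<Omega> \<phi> \<longrightarrow>
        (LINT x:\<Omega>|lborel. u x * partial \<phi> i x) = - (LINT x:\<Omega>|lborel. g x * \<phi> x))"

definition weak_grad :: "(real^'d) set \<Rightarrow> (real^'d \<Rightarrow> real) \<Rightarrow> (real^'d \<Rightarrow> real^'d) \<Rightarrow> bool" where
  "weak_grad \<Omega> u G \<longleftrightarrow> (\<forall>i. weak_partial \<Omega> u i (\<lambda>x. G x $ i))"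

definition H1 :: "(real^'d) set \<Rightarrow> (real^'d \<Rightarrow> real) \<Rightarrow> (real^'d \<Rightarrow> real^'d) \<Rightarrow> bool" where
  "H1 \<Omega> u G \<longleftrightarrow> L2 \<Omega> u \<and> weak_grad \<Omega> u G \<and> L2_vec \<Omega> G"

definition H10 :: "(real^'d) set \<Rightarrow> (real^'d \<Rightarrow> real) \<Rightarrow> (real^'d \<Rightarrow> real^'d) \<Rightarrow> bool" where
  "H10 \<Omega> u G \<longleftrightarrow> H1 \<Omega> u G \<and>
     (\<exists>\<phi>::nat \<Rightarrow> real^'d \<Rightarrow> real. (\<forall>k. test_fun \<Omega> (\<phi> k)) \<and>
        (\<lambda>k. L2norm \<Omega> (\<lambda>x. \<phi> k x - u x)) \<longlonglongrightarrow> 0 \<and>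
        (\<lambda>k. L2norm_vec \<Omega> (\<lambda>x. grad (\<phi> k) x - G x)) \<longlonglongrightarrow> 0)"

definition W2inf :: "(real^'d) set \<Rightarrow> (real^'d \<Rightarrow> real) \<Rightarrow> (real^'d \<Rightarrow> real^'d)
    \<Rightarrow> (real^'d \<Rightarrow> real^'d^'d) \<Rightarrow> bool" where
  "W2inf \<Omega> \<psi> G Hs \<longleftrightarrow> Linfty \<Omega> \<psi> \<and> weak_grad \<Omega> \<psi> G \<and> (\<forall>i. Linfty \<Omega> (\<lambda>x. G x $ i)) \<and>
     (\<forall>i j. weak_partial \<Omega> (\<lambda>x. G x $ i) j (\<lambda>x. Hs x $ i $ j) \<and> Linfty \<Omega> (\<lambda>x. Hs x $ i $ j))"

text \<open>Lipschitz boundary: near every boundary point, Omega is (in some direction e)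
  the subgraph of a Lipschitz function of the coordinates orthogonal to e.\<close>
definition lipschitz_boundary :: "(real^'d) set \<Rightarrow> bool" where
  "lipschitz_boundary \<Omega> \<longleftrightarrow> (\<forall>x\<in>frontier \<Omega>. \<exists>r>0. \<exists>e. norm e = 1 \<and>
     (\<exists>h::real^'d \<Rightarrow> real. \<exists>L. L-lipschitz_on {y. y \<bullet> e = 0} h \<and>
        \<Omega> \<inter> ball x r = {y \<in> ball x r. y \<bullet> e < h (y - (y \<bullet> e) *\<^sub>R e)}))"

definition bounded_polytopal_domain :: "(real^'d) set \<Rightarrow> bool" where
  "bounded_polytopal_domain \<Omega> \<longleftrightarrow> open \<Omega> \<and> connected \<Omega> \<and> \<Omega> \<noteq> {} \<and> bounded \<Omega> \<and>
     (\<exists>P. finite P \<and> (\<forall>p\<in>P. polytope p) \<and> closure \<Omega> = \<Union>P)"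

end

theory Submission
  imports Defs
begin

lemma abs_mult_le_sq: "\<bar>a * b\<bar> \<le> a\<^sup>2 + (b::real)\<^sup>2"
proof -
  have "2 * \<bar>a\<bar> * \<bar>b\<bar> \<le> \<bar>a\<bar>\<^sup>2 + \<bar>b\<bar>\<^sup>2" by (rule sum_squares_bound)
  moreover have "0 \<le> \<bar>a\<bar> * \<bar>b\<bar>" by simp
  ultimately show ?thesis unfolding abs_mult power2_abs by linarith
qed

lemma sq_int_mult:
  fixes f g :: "'a \<Rightarrow> real"
  assumes [measurable]: "f \<in> borel_measurable M" "g \<in> borel_measurable M"
    and "integrable M (\<lambda>x. (f x)\<^sup>2)" "integrable M (\<lambda>x. (g x)\<^sup>2)"
  shows "integrable M (\<lambda>x. f x * g x)"
proof (rule Bochner_Integration.integrable_bound[where f="\<lambda>x. (f x)\<^sup>2 + (g x)\<^sup>2"])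
  show "integrable M (\<lambda>x. (f x)\<^sup>2 + (g x)\<^sup>2)" using assms(3,4) by (rule Bochner_Integration.integrable_add)
  show "(\<lambda>x. f x * g x) \<in> borel_measurable M" by measurable
  show "AE x in M. norm (f x * g x) \<le> norm ((f x)\<^sup>2 + (g x)\<^sup>2)"
  proof (rule AE_I2)
    fix x
    have "\<bar>f x * g x\<bar> \<le> (f x)\<^sup>2 + (g x)\<^sup>2" by (rule abs_mult_le_sq)
    then show "norm (f x * g x) \<le> norm ((f x)\<^sup>2 + (g x)\<^sup>2)" by simp
  qed
qed

lemma sq_int_diff:
  fixes f g :: "'a \<Rightarrow> real"
  assumes [measurable]: "f \<in> borel_measurable M" "g \<in> borel_measurable M"
    and "integrable M (\<lambda>x. (f x)\<^sup>2)" "integrable M (\<lambda>x. (g x)\<^sup>2)"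
  shows "integrable M (\<lambda>x. (f x - g x)\<^sup>2)"
proof -
  have "integrable M (\<lambda>x. (f x)\<^sup>2 - 2 * (f x * g x) + (g x)\<^sup>2)"
    using sq_int_mult[OF assms] assms(3,4) by (intro Bochner_Integration.integrable_add Bochner_Integration.integrable_diff Bochner_Integration.integrable_mult_right)
  moreover have "(\<lambda>x. (f x - g x)\<^sup>2) = (\<lambda>x. (f x)\<^sup>2 - 2 * (f x * g x) + (g x)\<^sup>2)"
    by (rule ext) (simp add: power2_eq_square algebra_simps)
  ultimately show ?thesis by simp
qed

lemma CS_int:
  fixes f g :: "'a \<Rightarrow> real"
  assumes [measurable]: "f \<in> borel_measurable M" "g \<in> borel_measurable M"
    and fi: "integrable M (\<lambda>x. (f x)\<^sup>2)" and gi: "integrable M (\<lambda>x. (g x)\<^sup>2)"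
  shows "\<bar>integral\<^sup>L M (\<lambda>x. f x * g x)\<bar> \<le> sqrt (integral\<^sup>L M (\<lambda>x. (f x)\<^sup>2)) * sqrt (integral\<^sup>L M (\<lambda>x. (g x)\<^sup>2))"
proof -
  have fg: "integrable M (\<lambda>x. f x * g x)" using sq_int_mult[OF assms] .
  have "(\<integral>\<^sup>+x. ennreal \<bar>f x\<bar> * ennreal \<bar>g x\<bar> \<partial>M)\<^sup>2 \<le> (\<integral>\<^sup>+x. ennreal \<bar>f x\<bar> ^ 2 \<partial>M) * (\<integral>\<^sup>+x. ennreal \<bar>g x\<bar> ^ 2 \<partial>M)"
    by (rule Cauchy_Schwarz_nn_integral) auto
  also have "(\<lambda>x. ennreal \<bar>f x\<bar> * ennreal \<bar>g x\<bar>) = (\<lambda>x. ennreal \<bar>f x * g x\<bar>)"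
    by (simp add: abs_mult ennreal_mult)
  also have "(\<lambda>x. ennreal \<bar>f x\<bar> ^ 2) = (\<lambda>x. ennreal ((f x)\<^sup>2))"
    by (simp add: ennreal_power)
  also have "(\<lambda>x. ennreal \<bar>g x\<bar> ^ 2) = (\<lambda>x. ennreal ((g x)\<^sup>2))"
    by (simp add: ennreal_power)
  also have "(\<integral>\<^sup>+x. ennreal \<bar>f x * g x\<bar> \<partial>M) = ennreal (integral\<^sup>L M (\<lambda>x. \<bar>f x * g x\<bar>))"
    (is "_ = ennreal ?A")
    by (rule nn_integral_eq_integral) (use fg in auto)
  also have "(\<integral>\<^sup>+x. ennreal ((f x)\<^sup>2) \<partial>M) = ennreal (integral\<^sup>L M (\<lambda>x. (f x)\<^sup>2))"
    (is "_ = ennreal ?B")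
    by (rule nn_integral_eq_integral) (use fi in auto)
  also have "(\<integral>\<^sup>+x. ennreal ((g x)\<^sup>2) \<partial>M) = ennreal (integral\<^sup>L M (\<lambda>x. (g x)\<^sup>2))"
    (is "_ = ennreal ?C")
    by (rule nn_integral_eq_integral) (use gi in auto)
  finally have E: "ennreal ?A ^ 2 \<le> ennreal ?B * ennreal ?C" .
  have A0: "0 \<le> ?A" by (rule integral_nonneg_AE) simp
  have B0: "0 \<le> ?B" by (rule integral_nonneg_AE) simp
  have C0: "0 \<le> ?C" by (rule integral_nonneg_AE) simp
  have "ennreal (?A ^ 2) \<le> ennreal (?B * ?C)"
    using E by (simp only: ennreal_power[OF A0] ennreal_mult[OF B0 C0])
  then have "(integral\<^sup>L M (\<lambda>x. \<bar>f x * g x\<bar>))\<^sup>2 \<le> integral\<^sup>L M (\<lambda>x. (f x)\<^sup>2) * integral\<^sup>L M (\<lambda>x. (g x)\<^sup>2)"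
    using ennreal_le_iff[OF mult_nonneg_nonneg[OF B0 C0]] by blast
  then have "integral\<^sup>L M (\<lambda>x. \<bar>f x * g x\<bar>) \<le> sqrt (integral\<^sup>L M (\<lambda>x. (f x)\<^sup>2) * integral\<^sup>L M (\<lambda>x. (g x)\<^sup>2))"
    by (rule real_le_rsqrt)
  moreover have "\<bar>integral\<^sup>L M (\<lambda>x. f x * g x)\<bar> \<le> integral\<^sup>L M (\<lambda>x. \<bar>f x * g x\<bar>)"
    by (rule integral_abs_bound)
  ultimately have "\<bar>integral\<^sup>L M (\<lambda>x. f x * g x)\<bar> \<le> sqrt (integral\<^sup>L M (\<lambda>x. (f x)\<^sup>2) * integral\<^sup>L M (\<lambda>x. (g x)\<^sup>2))" by linarith
  then show ?thesis by (simp add: real_sqrt_mult)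

qed

lemma bnd_prod:
  fixes x y c :: "'a \<Rightarrow> real"
  assumes [measurable]: "x \<in> borel_measurable M" "y \<in> borel_measurable M" "c \<in> borel_measurable M"
    and ix: "integrable M (\<lambda>t. (x t)\<^sup>2)" and iy: "integrable M (\<lambda>t. (y t)\<^sup>2)"
    and cb: "AE t in M. \<bar>c t\<bar> \<le> C"
  shows "integrable M (\<lambda>t. x t * (c t * y t))"
    and "\<bar>integral\<^sup>L M (\<lambda>t. x t * (c t * y t))\<bar>
          \<le> sqrt (integral\<^sup>L M (\<lambda>t. (x t)\<^sup>2)) * (\<bar>C\<bar> * sqrt (integral\<^sup>L M (\<lambda>t. (y t)\<^sup>2)))"
proof -
  have AEb: "AE t in M. (c t * y t)\<^sup>2 \<le> C\<^sup>2 * (y t)\<^sup>2"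
    using cb
  proof eventually_elim
    case (elim t)
    then have "(c t)\<^sup>2 \<le> C\<^sup>2" using abs_le_square_iff[of "c t" C] by simp
    then show ?case by (simp add: power_mult_distrib mult_right_mono)
  qed
  have i2: "integrable M (\<lambda>t. C\<^sup>2 * (y t)\<^sup>2)" using iy by simp
  have icy: "integrable M (\<lambda>t. (c t * y t)\<^sup>2)"
  proof (rule Bochner_Integration.integrable_bound[OF i2])
    show "(\<lambda>t. (c t * y t)\<^sup>2) \<in> borel_measurable M" by measurable
    show "AE t in M. norm ((c t * y t)\<^sup>2) \<le> norm (C\<^sup>2 * (y t)\<^sup>2)"
      using AEb by eventually_elim simp
  qed
  have cym: "(\<lambda>t. c t * y t) \<in> borel_measurable M" by measurable
  show "integrable M (\<lambda>t. x t * (c t * y t))"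
    by (rule sq_int_mult[OF _ cym ix icy]) measurable
  have CS1: "\<bar>integral\<^sup>L M (\<lambda>t. x t * (c t * y t))\<bar>
        \<le> sqrt (integral\<^sup>L M (\<lambda>t. (x t)\<^sup>2)) * sqrt (integral\<^sup>L M (\<lambda>t. (c t * y t)\<^sup>2))"
    by (rule CS_int[OF _ cym ix icy]) measurable
  have "integral\<^sup>L M (\<lambda>t. (c t * y t)\<^sup>2) \<le> integral\<^sup>L M (\<lambda>t. C\<^sup>2 * (y t)\<^sup>2)"
    by (rule integral_mono_AE[OF icy i2 AEb])
  then have "sqrt (integral\<^sup>L M (\<lambda>t. (c t * y t)\<^sup>2)) \<le> sqrt (integral\<^sup>L M (\<lambda>t. C\<^sup>2 * (y t)\<^sup>2))"
    by (rule real_sqrt_le_mono)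
  then have "sqrt (integral\<^sup>L M (\<lambda>t. (c t * y t)\<^sup>2)) \<le> \<bar>C\<bar> * sqrt (integral\<^sup>L M (\<lambda>t. (y t)\<^sup>2))"
    by (simp add: real_sqrt_mult)
  then have "sqrt (integral\<^sup>L M (\<lambda>t. (x t)\<^sup>2)) * sqrt (integral\<^sup>L M (\<lambda>t. (c t * y t)\<^sup>2))
     \<le> sqrt (integral\<^sup>L M (\<lambda>t. (x t)\<^sup>2)) * (\<bar>C\<bar> * sqrt (integral\<^sup>L M (\<lambda>t. (y t)\<^sup>2)))"
    by (rule mult_left_mono) simp
  with CS1 show "\<bar>integral\<^sup>L M (\<lambda>t. x t * (c t * y t))\<bar>
          \<le> sqrt (integral\<^sup>L M (\<lambda>t. (x t)\<^sup>2)) * (\<bar>C\<bar> * sqrt (integral\<^sup>L M (\<lambda>t. (y t)\<^sup>2)))"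
    by (rule order_trans)
qed

lemma L2_prod_conv:
  fixes a b :: "nat \<Rightarrow> 'a \<Rightarrow> real" and a0 b0 c :: "'a \<Rightarrow> real"
  assumes [measurable]: "\<And>k. a k \<in> borel_measurable M" "\<And>k. b k \<in> borel_measurable M"
    "a0 \<in> borel_measurable M" "b0 \<in> borel_measurable M" "c \<in> borel_measurable M"
    and ia: "\<And>k. integrable M (\<lambda>x. (a k x)\<^sup>2)" and ib: "\<And>k. integrable M (\<lambda>x. (b k x)\<^sup>2)"
    and ia0: "integrable M (\<lambda>x. (a0 x)\<^sup>2)" and ib0: "integrable M (\<lambda>x. (b0 x)\<^sup>2)"
    and cb: "AE x in M. \<bar>c x\<bar> \<le> C"
    and la: "(\<lambda>k. integral\<^sup>L M (\<lambda>x. (a k x - a0 x)\<^sup>2)) \<longlonglongrightarrow> 0"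
    and lb: "(\<lambda>k. integral\<^sup>L M (\<lambda>x. (b k x - b0 x)\<^sup>2)) \<longlonglongrightarrow> 0"
  shows "(\<lambda>k. integral\<^sup>L M (\<lambda>x. a k x * (c x * b k x))) \<longlonglongrightarrow> integral\<^sup>L M (\<lambda>x. a0 x * (c x * b0 x))"
proof -
  define da where "da k x = a k x - a0 x" for k x
  define db where "db k x = b k x - b0 x" for k x
  have [measurable]: "da k \<in> borel_measurable M" "db k \<in> borel_measurable M" for k
    unfolding da_def db_def by measurable
  have ida: "integrable M (\<lambda>x. (da k x)\<^sup>2)" for k
    unfolding da_def by (rule sq_int_diff[OF _ _ ia ia0]) measurable
  have idb: "integrable M (\<lambda>x. (db k x)\<^sup>2)" for k
    unfolding db_def by (rule sq_int_diff[OF _ _ ib ib0]) measurable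
  define S where "S f = sqrt (integral\<^sup>L M (\<lambda>x. (f x)\<^sup>2))" for f :: "'a \<Rightarrow> real"
  define I where "I f g = integral\<^sup>L M (\<lambda>x. f x * (c x * g x))" for f g :: "'a \<Rightarrow> real"
  note B1 = bnd_prod[OF _ _ _ ida idb cb, unfolded S_def[symmetric] I_def[symmetric]]
  note B2 = bnd_prod[OF _ _ _ ida ib0 cb, unfolded S_def[symmetric] I_def[symmetric]]
  note B3 = bnd_prod[OF _ _ _ ia0 idb cb, unfolded S_def[symmetric] I_def[symmetric]]
  note B0 = bnd_prod[OF _ _ _ ia0 ib0 cb]
  have split: "integral\<^sup>L M (\<lambda>x. a k x * (c x * b k x))
      = I (da k) (db k) + I (da k) b0 + I a0 (db k) + I a0 b0" for k
  proof -
    have "integral\<^sup>L M (\<lambda>x. a k x * (c x * b k x))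
      = integral\<^sup>L M (\<lambda>x. da k x * (c x * db k x) + da k x * (c x * b0 x) + a0 x * (c x * db k x) + a0 x * (c x * b0 x))"
      by (rule Bochner_Integration.integral_cong) (simp_all add: da_def db_def algebra_simps)
    also have "\<dots> = I (da k) (db k) + I (da k) b0 + I a0 (db k) + I a0 b0"
      unfolding I_def
      by (subst Bochner_Integration.integral_add, (intro Bochner_Integration.integrable_add B1(1) B2(1) B3(1) B0(1); measurable)+,
          subst Bochner_Integration.integral_add, (intro Bochner_Integration.integrable_add B1(1) B2(1) B3(1) B0(1); measurable)+,
          subst Bochner_Integration.integral_add, (intro Bochner_Integration.integrable_add B1(1) B2(1) B3(1) B0(1); measurable)+) simp
    finally show ?thesis .
  qed
  define g where "g k = S (da k) * (\<bar>C\<bar> * S (db k)) + S (da k) * (\<bar>C\<bar> * S b0) + S a0 * (\<bar>C\<bar> * S (db k))" for k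
  have "g \<longlonglongrightarrow> sqrt 0 * (\<bar>C\<bar> * sqrt 0) + sqrt 0 * (\<bar>C\<bar> * S b0) + S a0 * (\<bar>C\<bar> * sqrt 0)"
    unfolding g_def S_def da_def db_def by (intro tendsto_intros la lb)
  then have g0: "g \<longlonglongrightarrow> 0" by simp
  have "(\<lambda>k. integral\<^sup>L M (\<lambda>x. a k x * (c x * b k x)) - I a0 b0) \<longlonglongrightarrow> 0"
  proof (rule Lim_null_comparison[OF _ g0])
    show "\<forall>\<^sub>F k in sequentially. norm (integral\<^sup>L M (\<lambda>x. a k x * (c x * b k x)) - I a0 b0) \<le> g k"
    proof (rule always_eventually, rule allI)
      fix k
      have "\<bar>I (da k) (db k)\<bar> \<le> S (da k) * (\<bar>C\<bar> * S (db k))" by (rule B1(2)) measurable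
      moreover have "\<bar>I (da k) b0\<bar> \<le> S (da k) * (\<bar>C\<bar> * S b0)" by (rule B2(2)) measurable
      moreover have "\<bar>I a0 (db k)\<bar> \<le> S a0 * (\<bar>C\<bar> * S (db k))" by (rule B3(2)) measurable
      ultimately show "norm (integral\<^sup>L M (\<lambda>x. a k x * (c x * b k x)) - I a0 b0) \<le> g k"
        unfolding split g_def real_norm_def by linarith
    qed
  qed
  then have "(\<lambda>k. (integral\<^sup>L M (\<lambda>x. a k x * (c x * b k x)) - I a0 b0) + I a0 b0) \<longlonglongrightarrow> 0 + I a0 b0"
    by (intro tendsto_intros)
  then show ?thesis unfolding I_def by simp
qed

definition bdd_ae :: "'a measure \<Rightarrow> ('a \<Rightarrow> real) \<Rightarrow> bool" where
  "bdd_ae M f \<longleftrightarrow> (\<exists>C. AE x in M. \<bar>f x\<bar> \<le> C)"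

lemma bdd_ae_mult: "bdd_ae M f \<Longrightarrow> bdd_ae M g \<Longrightarrow> bdd_ae M (\<lambda>x. f x * g x)"
  unfolding bdd_ae_def
proof (elim exE)
  fix C D assume C: "AE x in M. \<bar>f x\<bar> \<le> C" and D: "AE x in M. \<bar>g x\<bar> \<le> D"
  have "AE x in M. \<bar>f x * g x\<bar> \<le> C * D"
    using C D
  proof eventually_elim
    case (elim x)
    then show ?case unfolding abs_mult by (intro mult_mono) auto
  qed
  then show "\<exists>E. AE x in M. \<bar>f x * g x\<bar> \<le> E" by blast
qed

lemma bdd_ae_const: "bdd_ae M (\<lambda>x. c)"
  unfolding bdd_ae_def by (intro exI[of _ "\<bar>c\<bar>"]) simp

lemma bdd_ae_int:
  assumes "finite_measure M" "f \<in> borel_measurable M" "bdd_ae M f"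
  shows "integrable M f"
proof -
  obtain C where C: "AE x in M. \<bar>f x\<bar> \<le> C" using assms(3) unfolding bdd_ae_def by blast
  interpret finite_measure M by fact
  show ?thesis
  proof (rule Bochner_Integration.integrable_bound[where f="\<lambda>x. C"])
    show "integrable M (\<lambda>x. C)" by simp
    show "f \<in> borel_measurable M" by fact
    show "AE x in M. norm (f x) \<le> norm C" using C by eventually_elim auto
  qed
qed

lemma drift_test_M:
  fixes \<phi> :: "'a \<Rightarrow> real" and d\<phi> Gp H :: "'i::finite \<Rightarrow> 'a \<Rightarrow> real"
  assumes fm: "finite_measure M"
    and [measurable]: "\<phi> \<in> borel_measurable M" "\<And>i. d\<phi> i \<in> borel_measurable M"
      "\<And>i. Gp i \<in> borel_measurable M" "\<And>i. H i \<in> borel_measurable M"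
    and b: "bdd_ae M \<phi>" "\<And>i. bdd_ae M (d\<phi> i)" "\<And>i. bdd_ae M (Gp i)" "\<And>i. bdd_ae M (H i)"
    and weak: "\<And>i. integral\<^sup>L M (\<lambda>x. Gp i x * (2 * \<phi> x * d\<phi> i x)) = - integral\<^sup>L M (\<lambda>x. H i x * (\<phi> x * \<phi> x))"
    and lap: "AE x in M. (\<Sum>i\<in>UNIV. H i x) \<le> 0"
  shows "0 \<le> integral\<^sup>L M (\<lambda>x. \<phi> x * (\<Sum>i\<in>UNIV. Gp i x * d\<phi> i x))"
proof -
  have i1: "integrable M (\<lambda>x. \<phi> x * (Gp i x * d\<phi> i x))" for i
    by (rule bdd_ae_int[OF fm]) (measurable, intro bdd_ae_mult b)
  have i2: "integrable M (\<lambda>x. H i x * (\<phi> x * \<phi> x))" for i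
    by (rule bdd_ae_int[OF fm]) (measurable, intro bdd_ae_mult b)
  have e1: "integral\<^sup>L M (\<lambda>x. \<phi> x * (Gp i x * d\<phi> i x)) = - (1/2) * integral\<^sup>L M (\<lambda>x. H i x * (\<phi> x * \<phi> x))" for i
  proof -
    have "integral\<^sup>L M (\<lambda>x. \<phi> x * (Gp i x * d\<phi> i x)) = integral\<^sup>L M (\<lambda>x. (1/2) * (Gp i x * (2 * \<phi> x * d\<phi> i x)))"
      by (rule Bochner_Integration.integral_cong) (simp_all add: algebra_simps)
    also have "\<dots> = (1/2) * integral\<^sup>L M (\<lambda>x. Gp i x * (2 * \<phi> x * d\<phi> i x))"
      by (rule integral_mult_right_zero)
    finally show ?thesis using weak[of i] by simp
  qed
  have "integral\<^sup>L M (\<lambda>x. \<phi> x * (\<Sum>i\<in>UNIV. Gp i x * d\<phi> i x))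
      = integral\<^sup>L M (\<lambda>x. \<Sum>i\<in>UNIV. \<phi> x * (Gp i x * d\<phi> i x))"
    by (simp add: sum_distrib_left)
  also have "\<dots> = (\<Sum>i\<in>UNIV. integral\<^sup>L M (\<lambda>x. \<phi> x * (Gp i x * d\<phi> i x)))"
    by (rule Bochner_Integration.integral_sum) (rule i1)
  also have "\<dots> = - (1/2) * (\<Sum>i\<in>UNIV. integral\<^sup>L M (\<lambda>x. H i x * (\<phi> x * \<phi> x)))"
    by (simp add: e1 sum_distrib_left)
  also have "(\<Sum>i\<in>UNIV. integral\<^sup>L M (\<lambda>x. H i x * (\<phi> x * \<phi> x)))
      = integral\<^sup>L M (\<lambda>x. \<Sum>i\<in>UNIV. H i x * (\<phi> x * \<phi> x))"
    by (rule Bochner_Integration.integral_sum[symmetric]) (rule i2)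
  also have "\<dots> = integral\<^sup>L M (\<lambda>x. (\<Sum>i\<in>UNIV. H i x) * (\<phi> x * \<phi> x))"
    by (simp add: sum_distrib_right)
  finally have eq: "integral\<^sup>L M (\<lambda>x. \<phi> x * (\<Sum>i\<in>UNIV. Gp i x * d\<phi> i x))
      = (1/2) * integral\<^sup>L M (\<lambda>x. - ((\<Sum>i\<in>UNIV. H i x) * (\<phi> x * \<phi> x)))" by simp
  have "0 \<le> integral\<^sup>L M (\<lambda>x. - ((\<Sum>i\<in>UNIV. H i x) * (\<phi> x * \<phi> x)))"
    by (rule integral_nonneg_AE) (use lap in \<open>eventually_elim, simp add: mult_nonpos_nonneg\<close>)
  then show ?thesis unfolding eq by simp
qed


lemma partial_add_at:
  assumes "f differentiable (at x)" "g differentiable (at x)"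
  shows "partial (\<lambda>y. f y + g y) i x = partial f i x + partial g i x"
proof -
  have "((\<lambda>y. f y + g y) has_derivative (\<lambda>h. frechet_derivative f (at x) h + frechet_derivative g (at x) h)) (at x)"
    using assms by (intro has_derivative_add) (simp_all add: frechet_derivative_works[symmetric])
  then have "(\<lambda>h. frechet_derivative f (at x) h + frechet_derivative g (at x) h) = frechet_derivative (\<lambda>y. f y + g y) (at x)"
    by (rule frechet_derivative_at)
  then show ?thesis unfolding partial_def by (metis (no_types, lifting))
qed

lemma partial_mult_at:
  assumes "f differentiable (at x)" "g differentiable (at x)"
  shows "partial (\<lambda>y. f y * g y) i x = f x * partial g i x + partial f i x * g x"
proof -
  have "((\<lambda>y. f y * g y) has_derivative (\<lambda>h. f x * frechet_derivative g (at x) h + frechet_derivative f (at x) h * g x)) (at x)"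
    using assms by (intro has_derivative_mult) (simp_all add: frechet_derivative_works[symmetric])
  then have "(\<lambda>h. f x * frechet_derivative g (at x) h + frechet_derivative f (at x) h * g x) = frechet_derivative (\<lambda>y. f y * g y) (at x)"
    by (rule frechet_derivative_at)
  then show ?thesis unfolding partial_def by (metis (no_types, lifting))
qed

lemma Ck_mono: "Ck (Suc k) f \<Longrightarrow> Ck k f"
proof (induction k arbitrary: f)
  case 0
  then have "f differentiable_on UNIV" by (simp add: differentiable_on_def)
  then show ?case by (simp add: differentiable_imp_continuous_on)
next
  case (Suc k)
  then show ?case by simp
qed

lemma Ck_add: "Ck k f \<Longrightarrow> Ck k g \<Longrightarrow> Ck k (\<lambda>x. f x + g x)"
proof (induction k arbitrary: f g)
  case 0
  then show ?case by (simp add: continuous_on_add)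
next
  case (Suc k)
  have df: "\<forall>x. f differentiable (at x)" and dg: "\<forall>x. g differentiable (at x)" using Suc.prems by auto
  have p: "partial (\<lambda>x. f x + g x) i = (\<lambda>x. partial f i x + partial g i x)" for i
    using df dg by (simp add: fun_eq_iff partial_add_at)
  show ?case using Suc.prems df dg by (simp add: p Suc.IH)
qed

lemma Ck_mult: "Ck k f \<Longrightarrow> Ck k g \<Longrightarrow> Ck k (\<lambda>x. f x * g x)"
proof (induction k arbitrary: f g)
  case 0
  then show ?case by (simp add: continuous_on_mult)
next
  case (Suc k)
  have df: "\<forall>x. f differentiable (at x)" and dg: "\<forall>x. g differentiable (at x)" using Suc.prems by auto
  have p: "partial (\<lambda>x. f x * g x) i = (\<lambda>x. f x * partial g i x + partial f i x * g x)" for i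
    using df dg by (simp add: fun_eq_iff partial_mult_at)
  have "Ck k (\<lambda>x. f x * partial g i x + partial f i x * g x)" for i
  proof (rule Ck_add)
    show "Ck k (\<lambda>x. f x * partial g i x)"
      by (rule Suc.IH) (use Suc.prems Ck_mono in auto)
    show "Ck k (\<lambda>x. partial f i x * g x)"
      by (rule Suc.IH) (use Suc.prems Ck_mono in auto)
  qed
  then show ?case using df dg by (simp add: p)
qed

lemma test_fun_sq:
  assumes "test_fun \<Omega> \<phi>"
  shows "test_fun \<Omega> (\<lambda>x. \<phi> x * \<phi> x)"
  using assms unfolding test_fun_def smooth_def by (simp add: Ck_mult)

lemma smooth_diff: "smooth \<phi> \<Longrightarrow> \<phi> differentiable (at x)"
  unfolding smooth_def by (metis Ck.simps(2))

lemma smooth_cont: "smooth \<phi> \<Longrightarrow> continuous_on UNIV \<phi>"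
  unfolding smooth_def by (metis Ck.simps(1))

lemma smooth_partial_cont: "smooth \<phi> \<Longrightarrow> continuous_on UNIV (partial \<phi> i)"
  unfolding smooth_def by (metis Ck.simps(1) Ck.simps(2) One_nat_def)

lemma partial_sq:
  assumes "smooth \<phi>"
  shows "partial (\<lambda>x. \<phi> x * \<phi> x) i x = 2 * \<phi> x * partial \<phi> i x"
  using partial_mult_at[OF smooth_diff[OF assms] smooth_diff[OF assms]] by simp


lemma Os: "open \<Omega> \<Longrightarrow> \<Omega> \<inter> space lborel \<in> sets lborel"
  by simp

lemma conv_meas:
  assumes "open \<Omega>"
  shows "set_borel_measurable lborel \<Omega> (f :: _ \<Rightarrow> real) \<longleftrightarrow> f \<in> borel_measurable (restrict_space lborel \<Omega>)"
  unfolding set_borel_measurable_def by (simp add: borel_measurable_restrict_space_iff[OF Os[OF assms]])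

lemma conv_int: "open \<Omega> \<Longrightarrow> set_integrable lborel \<Omega> (f :: _ \<Rightarrow> real) \<longleftrightarrow> integrable (restrict_space lborel \<Omega>) f"
  by (rule set_integrable_eq[OF Os])

lemma conv_I: "open \<Omega> \<Longrightarrow> set_lebesgue_integral lborel \<Omega> (f :: _ \<Rightarrow> real) = integral\<^sup>L (restrict_space lborel \<Omega>) f"
  unfolding set_lebesgue_integral_def by (rule integral_restrict_space[OF Os, symmetric])

lemma conv_AE: "open \<Omega> \<Longrightarrow> (AE x in lborel. x \<in> \<Omega> \<longrightarrow> P x) \<longleftrightarrow> (AE x in restrict_space lborel \<Omega>. P x)"
  by (rule AE_restrict_space_iff[OF Os, symmetric])

lemma conv_fm: "open \<Omega> \<Longrightarrow> bounded \<Omega> \<Longrightarrow> finite_measure (restrict_space lborel \<Omega>)"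
proof (rule finite_measureI)
  assume "open \<Omega>" "bounded \<Omega>"
  have "emeasure (restrict_space lborel \<Omega>) (space (restrict_space lborel \<Omega>)) = emeasure lborel \<Omega>"
    using \<open>open \<Omega>\<close> by (simp add: space_restrict_space emeasure_restrict_space)
  also have "\<dots> < \<infinity>" using emeasure_bounded_finite[OF \<open>bounded \<Omega>\<close>] .
  finally show "emeasure (restrict_space lborel \<Omega>) (space (restrict_space lborel \<Omega>)) \<noteq> \<infinity>" by simp
qed

lemma conv_Linfty: "open \<Omega> \<Longrightarrow> Linfty \<Omega> f \<longleftrightarrow> f \<in> borel_measurable (restrict_space lborel \<Omega>) \<and> bdd_ae (restrict_space lborel \<Omega>) f"
  unfolding Linfty_def bdd_ae_def by (simp add: conv_meas conv_AE)

lemma conv_L2: "open \<Omega> \<Longrightarrow> L2 \<Omega> f \<longleftrightarrow> f \<in> borel_measurable (restrict_space lborel \<Omega>) \<and> integrable (restrict_space lborel \<Omega>) (\<lambda>x. (f x)\<^sup>2)"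
  unfolding L2_def by (simp add: conv_meas conv_int)

lemma cont_meas: "continuous_on UNIV g \<Longrightarrow> g \<in> borel_measurable (restrict_space lborel \<Omega>)"
  by (rule measurable_restrict_space1) (simp add: borel_measurable_continuous_onI)

lemma cont_bdd:
  assumes "continuous_on UNIV (g :: real^'d \<Rightarrow> real)" "open \<Omega>" "bounded \<Omega>"
  shows "bdd_ae (restrict_space lborel \<Omega>) g"
proof -
  have "compact (g ` closure \<Omega>)"
    by (rule compact_continuous_image) (use assms in \<open>auto intro: continuous_on_subset\<close>)
  then have "bounded (g ` closure \<Omega>)" by (rule compact_imp_bounded)
  then obtain B where B: "\<forall>y\<in>g ` closure \<Omega>. norm y \<le> B" unfolding bounded_iff by blast
  have "AE x in lborel. x \<in> \<Omega> \<longrightarrow> \<bar>g x\<bar> \<le> B"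
    using B closure_subset by (intro AE_I2) force
  then show ?thesis unfolding bdd_ae_def using conv_AE[OF assms(2)] by blast
qed

lemma bdd_ae_sq_int:
  assumes "finite_measure M" "f \<in> borel_measurable M" "bdd_ae M f"
  shows "integrable M (\<lambda>x. (f x)\<^sup>2)"
  unfolding power2_eq_square
  by (rule bdd_ae_int[OF assms(1)]) (use assms(2,3) bdd_ae_mult in auto)

lemma L2norm_sq: "open \<Omega> \<Longrightarrow> (L2norm \<Omega> f)\<^sup>2 = integral\<^sup>L (restrict_space lborel \<Omega>) (\<lambda>x. (f x)\<^sup>2)"
  unfolding L2norm_def conv_I by (simp add: integral_nonneg_AE)

lemma L2norm_vec_sq: "open \<Omega> \<Longrightarrow> (L2norm_vec \<Omega> G)\<^sup>2 = integral\<^sup>L (restrict_space lborel \<Omega>) (\<lambda>x. (norm (G x))\<^sup>2)"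
  unfolding L2norm_vec_def conv_I by (simp add: integral_nonneg_AE)

lemma norm_sq_cart: "(norm (v :: real^'d))\<^sup>2 = (\<Sum>i\<in>UNIV. (v $ i)\<^sup>2)"
  unfolding power2_norm_eq_inner inner_vec_def by (simp add: power2_eq_square)


lemma drift:
  fixes \<Omega> :: "(real^'d) set" and \<psi> :: "real^'d \<Rightarrow> real" and G\<psi> :: "real^'d \<Rightarrow> real^'d"
    and H\<psi> :: "real^'d \<Rightarrow> real^'d^'d" and w :: "real^'d \<Rightarrow> real" and G :: "real^'d \<Rightarrow> real^'d"
  assumes op: "open \<Omega>" and bd: "bounded \<Omega>" and psi: "W2inf \<Omega> \<psi> G\<psi> H\<psi>"
    and lap: "AE x in lborel. x \<in> \<Omega> \<longrightarrow> (\<Sum>i\<in>UNIV. H\<psi> x $ i $ i) \<le> 0"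
    and h: "H10 \<Omega> w G"
  shows "0 \<le> (LINT x:\<Omega>|lborel. w x * (G\<psi> x \<bullet> G x))"
proof -
  define M where "M = restrict_space lborel \<Omega>"
  have fm: "finite_measure M" unfolding M_def using op bd by (rule conv_fm)
  obtain \<phi> :: "nat \<Rightarrow> real^'d \<Rightarrow> real" where tf: "\<And>k. test_fun \<Omega> (\<phi> k)"
    and c1: "(\<lambda>k. L2norm \<Omega> (\<lambda>x. \<phi> k x - w x)) \<longlonglongrightarrow> 0"
    and c2: "(\<lambda>k. L2norm_vec \<Omega> (\<lambda>x. grad (\<phi> k) x - G x)) \<longlonglongrightarrow> 0"
    using h unfolding H10_def by blast
  have hw: "L2 \<Omega> w" and hG: "\<And>i. L2 \<Omega> (\<lambda>x. G x $ i)"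
    using h unfolding H10_def H1_def L2_vec_def by auto
  have wm[measurable]: "w \<in> borel_measurable M" and wi: "integrable M (\<lambda>x. (w x)\<^sup>2)"
    using hw unfolding M_def conv_L2[OF op] by auto
  have Gm[measurable]: "(\<lambda>x. G x $ i) \<in> borel_measurable M" and Gi: "integrable M (\<lambda>x. (G x $ i)\<^sup>2)" for i
    using hG[of i] unfolding M_def conv_L2[OF op] by auto
  have Pm[measurable]: "(\<lambda>x. G\<psi> x $ i) \<in> borel_measurable M" and Pb: "bdd_ae M (\<lambda>x. G\<psi> x $ i)" for i
    using psi unfolding W2inf_def M_def conv_Linfty[OF op] by auto
  have Hm[measurable]: "(\<lambda>x. H\<psi> x $ i $ i) \<in> borel_measurable M" and Hb: "bdd_ae M (\<lambda>x. H\<psi> x $ i $ i)" for i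
    using psi unfolding W2inf_def M_def conv_Linfty[OF op] by auto
  have wp: "weak_partial \<Omega> (\<lambda>x. G\<psi> x $ i) i (\<lambda>x. H\<psi> x $ i $ i)" for i
    using psi unfolding W2inf_def by auto
  have sm: "smooth (\<phi> k)" for k using tf[of k] unfolding test_fun_def by auto
  have \<phi>m[measurable]: "\<phi> k \<in> borel_measurable M" and \<phi>b: "bdd_ae M (\<phi> k)" for k
    unfolding M_def using cont_meas[OF smooth_cont[OF sm]] cont_bdd[OF smooth_cont[OF sm] op bd] by auto
  have dm[measurable]: "partial (\<phi> k) i \<in> borel_measurable M" and db: "bdd_ae M (partial (\<phi> k) i)" for k i
    unfolding M_def using cont_meas[OF smooth_partial_cont[OF sm]] cont_bdd[OF smooth_partial_cont[OF sm] op bd] by auto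
  have lapM: "AE x in M. (\<Sum>i\<in>UNIV. H\<psi> x $ i $ i) \<le> 0"
    using lap unfolding M_def conv_AE[OF op] .
  have stepA: "0 \<le> integral\<^sup>L M (\<lambda>x. \<phi> k x * (\<Sum>i\<in>UNIV. G\<psi> x $ i * partial (\<phi> k) i x))" for k
  proof (rule drift_test_M[OF fm, where H="\<lambda>i x. H\<psi> x $ i $ i"])
    show "bdd_ae M (\<phi> k)" by (rule \<phi>b)
    show "bdd_ae M (partial (\<phi> k) i)" for i by (rule db)
    show "bdd_ae M (\<lambda>x. G\<psi> x $ i)" for i by (rule Pb)
    show "bdd_ae M (\<lambda>x. H\<psi> x $ i $ i)" for i by (rule Hb)
    show "AE x in M. (\<Sum>i\<in>UNIV. H\<psi> x $ i $ i) \<le> 0" by (rule lapM)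
    show "integral\<^sup>L M (\<lambda>x. G\<psi> x $ i * (2 * \<phi> k x * partial (\<phi> k) i x)) =
          - integral\<^sup>L M (\<lambda>x. H\<psi> x $ i $ i * (\<phi> k x * \<phi> k x))" for i
    proof -
      have "(LINT x:\<Omega>|lborel. G\<psi> x $ i * partial (\<lambda>x. \<phi> k x * \<phi> k x) i x)
          = - (LINT x:\<Omega>|lborel. H\<psi> x $ i $ i * (\<phi> k x * \<phi> k x))"
        using wp[of i] test_fun_sq[OF tf[of k]] unfolding weak_partial_def by blast
      then show ?thesis unfolding partial_sq[OF sm] conv_I[OF op] M_def .
    qed
  qed measurable
  have la: "(\<lambda>k. integral\<^sup>L M (\<lambda>x. (\<phi> k x - w x)\<^sup>2)) \<longlonglongrightarrow> 0"
  proof -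
    have "(\<lambda>k. (L2norm \<Omega> (\<lambda>x. \<phi> k x - w x))\<^sup>2) \<longlonglongrightarrow> 0\<^sup>2"
      by (intro tendsto_intros c1)
    then show ?thesis unfolding L2norm_sq[OF op] M_def by simp
  qed
  have isq: "integrable M (\<lambda>x. (partial (\<phi> k) i x - G x $ i)\<^sup>2)" for k i
    by (rule sq_int_diff[OF _ _ bdd_ae_sq_int[OF fm dm db] Gi]) measurable
  have lb: "(\<lambda>k. integral\<^sup>L M (\<lambda>x. (partial (\<phi> k) i x - G x $ i)\<^sup>2)) \<longlonglongrightarrow> 0" for i
  proof (rule Lim_null_comparison)
    have "(\<lambda>k. (L2norm_vec \<Omega> (\<lambda>x. grad (\<phi> k) x - G x))\<^sup>2) \<longlonglongrightarrow> 0\<^sup>2"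
      by (intro tendsto_intros c2)
    then show "(\<lambda>k. (L2norm_vec \<Omega> (\<lambda>x. grad (\<phi> k) x - G x))\<^sup>2) \<longlonglongrightarrow> 0" by simp
    show "\<forall>\<^sub>F k in sequentially. norm (integral\<^sup>L M (\<lambda>x. (partial (\<phi> k) i x - G x $ i)\<^sup>2))
           \<le> (L2norm_vec \<Omega> (\<lambda>x. grad (\<phi> k) x - G x))\<^sup>2"
    proof (rule always_eventually, rule allI)
      fix k
      have comp: "(grad (\<phi> k) x - G x) $ j = partial (\<phi> k) j x - G x $ j" for x j
        by (simp add: grad_def)
      have nrm: "(norm (grad (\<phi> k) x - G x))\<^sup>2 = (\<Sum>j\<in>UNIV. (partial (\<phi> k) j x - G x $ j)\<^sup>2)" for x
        unfolding norm_sq_cart comp ..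
      have "integral\<^sup>L M (\<lambda>x. (partial (\<phi> k) i x - G x $ i)\<^sup>2)
          \<le> integral\<^sup>L M (\<lambda>x. (\<Sum>j\<in>UNIV. (partial (\<phi> k) j x - G x $ j)\<^sup>2))"
      proof (rule integral_mono)
        show "integrable M (\<lambda>x. (partial (\<phi> k) i x - G x $ i)\<^sup>2)" by (rule isq)
        show "integrable M (\<lambda>x. (\<Sum>j\<in>UNIV. (partial (\<phi> k) j x - G x $ j)\<^sup>2))"
          by (rule Bochner_Integration.integrable_sum) (rule isq)
        show "(partial (\<phi> k) i x - G x $ i)\<^sup>2 \<le> (\<Sum>j\<in>UNIV. (partial (\<phi> k) j x - G x $ j)\<^sup>2)" for x
          by (rule member_le_sum) auto
      qed
      also have "\<dots> = (L2norm_vec \<Omega> (\<lambda>x. grad (\<phi> k) x - G x))\<^sup>2"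
        unfolding L2norm_vec_sq[OF op] nrm M_def ..
      finally show "norm (integral\<^sup>L M (\<lambda>x. (partial (\<phi> k) i x - G x $ i)\<^sup>2))
           \<le> (L2norm_vec \<Omega> (\<lambda>x. grad (\<phi> k) x - G x))\<^sup>2"
        by (simp add: integral_nonneg_AE)
    qed
  qed
  have limA: "(\<lambda>k. integral\<^sup>L M (\<lambda>x. \<phi> k x * (G\<psi> x $ i * partial (\<phi> k) i x)))
      \<longlonglongrightarrow> integral\<^sup>L M (\<lambda>x. w x * (G\<psi> x $ i * G x $ i))" for i
  proof -
    obtain C where C: "AE x in M. \<bar>G\<psi> x $ i\<bar> \<le> C" using Pb[of i] unfolding bdd_ae_def by blast
    show ?thesis
      by (rule L2_prod_conv[OF _ _ _ _ _ bdd_ae_sq_int[OF fm \<phi>m \<phi>b] bdd_ae_sq_int[OF fm dm db] wi Gi C la lb])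
         measurable
  qed
  have eqA: "integral\<^sup>L M (\<lambda>x. \<phi> k x * (\<Sum>i\<in>UNIV. G\<psi> x $ i * partial (\<phi> k) i x))
      = (\<Sum>i\<in>UNIV. integral\<^sup>L M (\<lambda>x. \<phi> k x * (G\<psi> x $ i * partial (\<phi> k) i x)))" for k
    unfolding sum_distrib_left
    by (rule Bochner_Integration.integral_sum, rule bdd_ae_int[OF fm]) (measurable, intro bdd_ae_mult \<phi>b Pb db)
  have eqW: "integral\<^sup>L M (\<lambda>x. w x * (G\<psi> x \<bullet> G x))
      = (\<Sum>i\<in>UNIV. integral\<^sup>L M (\<lambda>x. w x * (G\<psi> x $ i * G x $ i)))"
    unfolding inner_vec_def inner_real_def sum_distrib_left
  proof (rule Bochner_Integration.integral_sum)
    fix i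
    obtain C where C: "AE x in M. \<bar>G\<psi> x $ i\<bar> \<le> C" using Pb[of i] unfolding bdd_ae_def by blast
    show "integrable M (\<lambda>x. w x * (G\<psi> x $ i * G x $ i))"
      by (rule bnd_prod(1)[OF _ _ _ wi Gi C]) measurable
  qed
  have "(\<lambda>k. \<Sum>i\<in>UNIV. integral\<^sup>L M (\<lambda>x. \<phi> k x * (G\<psi> x $ i * partial (\<phi> k) i x)))
      \<longlonglongrightarrow> (\<Sum>i\<in>UNIV. integral\<^sup>L M (\<lambda>x. w x * (G\<psi> x $ i * G x $ i)))"
    by (intro tendsto_sum limA)
  then have "0 \<le> (\<Sum>i\<in>UNIV. integral\<^sup>L M (\<lambda>x. w x * (G\<psi> x $ i * G x $ i)))"
    by (rule LIMSEQ_le_const) (use stepA eqA in auto)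
  then show ?thesis unfolding conv_I[OF op] M_def[symmetric] eqW .
qed


theorem lemma7:
  fixes \<Omega> :: "(real^'d) set"
    and \<psi> :: "real^'d \<Rightarrow> real" and G\<psi> :: "real^'d \<Rightarrow> real^'d" and H\<psi> :: "real^'d \<Rightarrow> real^'d^'d"
    and \<tau> :: real and N :: nat
    and u :: "nat \<Rightarrow> real^'d \<Rightarrow> real" and Gu :: "nat \<Rightarrow> real^'d \<Rightarrow> real^'d"
  assumes dim: "CARD('d) \<le> 3"
    and dom: "bounded_polytopal_domain \<Omega>"
    and lip: "lipschitz_boundary \<Omega>"
    and psi: "W2inf \<Omega> \<psi> G\<psi> H\<psi>"
    and lap: "AE x in lborel. x \<in> \<Omega> \<longrightarrow> (\<Sum>i\<in>UNIV. H\<psi> x $ i $ i) \<le> 0"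
    and tau: "\<tau> > 0"
    and u0: "Linfty \<Omega> (u 0)"
    and u0_nonneg: "AE x in lborel. x \<in> \<Omega> \<longrightarrow> u 0 x \<ge> 0"
    and uH: "\<And>n. n \<in> {1..N} \<Longrightarrow> H10 \<Omega> (u n) (Gu n)"
    and scheme: "\<And>n v Gv. n \<in> {1..N} \<Longrightarrow> H10 \<Omega> v Gv \<Longrightarrow>
        (LINT x:\<Omega>|lborel. u n x * v x)
        + \<tau> * ((LINT x:\<Omega>|lborel. Gu n x \<bullet> Gv x) + (LINT x:\<Omega>|lborel. u n x * (G\<psi> x \<bullet> Gv x)))
        = (LINT x:\<Omega>|lborel. u (n - 1) x * v x)"
  shows "\<forall>n\<in>{1..N}. (1/2) * (L2norm \<Omega> (u n))\<^sup>2
           \<le> (1/2) * (L2norm \<Omega> (u (n - 1)))\<^sup>2 - \<tau> * (L2norm_vec \<Omega> (Gu n))\<^sup>2"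
proof
  fix n assume n: "n \<in> {1..N}"
  have op: "open \<Omega>" and bd: "bounded \<Omega>" using dom unfolding bounded_polytopal_domain_def by auto
  define M where "M = restrict_space lborel \<Omega>"
  have fm: "finite_measure M" unfolding M_def using op bd by (rule conv_fm)
  have hn: "H10 \<Omega> (u n) (Gu n)" using uH[OF n] .
  have wL: "L2 \<Omega> (u n)" using hn unfolding H10_def H1_def by auto
  have wm[measurable]: "u n \<in> borel_measurable M" and wi: "integrable M (\<lambda>x. (u n x)\<^sup>2)"
    using wL unfolding M_def conv_L2[OF op] by auto
  have pL: "u (n - 1) \<in> borel_measurable M \<and> integrable M (\<lambda>x. (u (n - 1) x)\<^sup>2)"
  proof (cases "n = 1")
    case True
    have "u 0 \<in> borel_measurable M" "bdd_ae M (u 0)"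
      using u0 unfolding M_def conv_Linfty[OF op] by auto
    then show ?thesis using True bdd_ae_sq_int[OF fm] by auto
  next
    case False
    then have "n - 1 \<in> {1..N}" using n by auto
    then have "L2 \<Omega> (u (n - 1))" using uH unfolding H10_def H1_def by auto
    then show ?thesis unfolding M_def conv_L2[OF op] by auto
  qed
  then have pm[measurable]: "u (n - 1) \<in> borel_measurable M" and pi: "integrable M (\<lambda>x. (u (n - 1) x)\<^sup>2)"
    by auto
  have sch: "(LINT x:\<Omega>|lborel. u n x * u n x)
        + \<tau> * ((LINT x:\<Omega>|lborel. Gu n x \<bullet> Gu n x) + (LINT x:\<Omega>|lborel. u n x * (G\<psi> x \<bullet> Gu n x)))
        = (LINT x:\<Omega>|lborel. u (n - 1) x * u n x)"
    using scheme[OF n hn] .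
  have dr: "0 \<le> (LINT x:\<Omega>|lborel. u n x * (G\<psi> x \<bullet> Gu n x))"
    by (rule drift[OF op bd psi lap hn])
  have A: "(LINT x:\<Omega>|lborel. u n x * u n x) = (L2norm \<Omega> (u n))\<^sup>2"
    unfolding L2norm_sq[OF op] conv_I[OF op] by (simp add: power2_eq_square)
  have D: "(LINT x:\<Omega>|lborel. Gu n x \<bullet> Gu n x) = (L2norm_vec \<Omega> (Gu n))\<^sup>2"
    unfolding L2norm_vec_sq[OF op] conv_I[OF op] by (simp add: power2_norm_eq_inner)
  have P: "(LINT x:\<Omega>|lborel. u (n - 1) x * u n x)
      \<le> (1/2) * (L2norm \<Omega> (u (n - 1)))\<^sup>2 + (1/2) * (L2norm \<Omega> (u n))\<^sup>2"
  proof -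
    have "integral\<^sup>L M (\<lambda>x. u (n - 1) x * u n x)
        \<le> integral\<^sup>L M (\<lambda>x. (1/2) * (u (n - 1) x)\<^sup>2 + (1/2) * (u n x)\<^sup>2)"
    proof (rule integral_mono)
      show "integrable M (\<lambda>x. u (n - 1) x * u n x)" by (rule sq_int_mult[OF pm wm pi wi])
      show "integrable M (\<lambda>x. (1/2) * (u (n - 1) x)\<^sup>2 + (1/2) * (u n x)\<^sup>2)"
        using pi wi by simp
      show "u (n - 1) x * u n x \<le> (1/2) * (u (n - 1) x)\<^sup>2 + (1/2) * (u n x)\<^sup>2" for x
        using sum_squares_bound[of "u (n - 1) x" "u n x"] by simp
    qed
    also have "\<dots> = (1/2) * integral\<^sup>L M (\<lambda>x. (u (n - 1) x)\<^sup>2) + (1/2) * integral\<^sup>L M (\<lambda>x. (u n x)\<^sup>2)"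
      using pi wi by simp
    finally show ?thesis unfolding L2norm_sq[OF op] conv_I[OF op] M_def .
  qed
  have "\<tau> * (LINT x:\<Omega>|lborel. u n x * (G\<psi> x \<bullet> Gu n x)) \<ge> 0"
    using tau dr by simp
  then show "(1/2) * (L2norm \<Omega> (u n))\<^sup>2
           \<le> (1/2) * (L2norm \<Omega> (u (n - 1)))\<^sup>2 - \<tau> * (L2norm_vec \<Omega> (Gu n))\<^sup>2"
    using sch P unfolding A D distrib_left by linarith
qed


end
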